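(* Let $S\subset\mathbb R^2$ be a finite set of $n>4$ points, none of which lies at the center $O$ of SED$(S)$, and with no two points on a common ray from $O$. If $S$ is both Pre-regular and Equiangular, then $S$ is Regular, i.e., its points are the vertices of a regular $n$-gon.
   Context: SED$(S)$ is the smallest closed disk containing $S$, SEC$(S)$ its boundary circle, and $O$ its center. $S$ is \emph{Pre-regular} if there is a regular $n$-gon $P$ (the supporting polygon) such that for every pair of adjacent edges of $P$, one of the two edges contains exactly two points of $S$ (possibly at its endpoints) and the relative interior of the other edge contains no point of $S$. $S$ is \emph{Equiangular} if, listing the points of $S$ as $p_0,\dots,p_{n-1}$ in cyclic order around $O$, every angle $\angle p_iOp_{i+1}$ (indices mod $n$) equals $2\pi/n$. *)

theory Defs
  imports "HOL-Analysis.Analysis"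
begin

text \<open>The plane R^2 is modelled by the complex numbers.\<close>

definition sed_center :: "complex set \<Rightarrow> complex \<Rightarrow> bool" where
  "sed_center S c \<longleftrightarrow>
     (\<exists>r. S \<subseteq> cball c r \<and> (\<forall>c' r'. S \<subseteq> cball c' r' \<longrightarrow> r \<le> r'))"

definition rpoly_vertex :: "complex \<Rightarrow> real \<Rightarrow> real \<Rightarrow> nat \<Rightarrow> nat \<Rightarrow> complex" where
  "rpoly_vertex c r th n k = c + complex_of_real r * cis (th + 2 * pi * real k / real n)"

definition regular_ngon :: "nat \<Rightarrow> complex set \<Rightarrow> bool" where
  "regular_ngon n V \<longleftrightarrow> n \<ge> 3 \<and>
     (\<exists>c r th. r > 0 \<and> V = rpoly_vertex c r th n ` {..<n})"

definition Regular :: "complex set \<Rightarrow> bool" where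
  "Regular S \<longleftrightarrow> regular_ngon (card S) S"

text \<open>S is Pre-regular: there is a regular n-gon (n = |S|) whose k-th edge is the closed
  segment from vertex k to vertex k+1 (indices mod n), such that for each pair of
  adjacent edges, one contains exactly two points of S and the relative interior of the
  other contains no point of S.\<close>
definition Pre_regular :: "complex set \<Rightarrow> bool" where
  "Pre_regular S \<longleftrightarrow> card S \<ge> 3 \<and>
     (\<exists>c r th. r > 0 \<and>
       (let n = card S; v = rpoly_vertex c r th n in
        \<forall>k<n.
          (card (S \<inter> closed_segment (v k) (v (k + 1))) = 2 \<and>
             S \<inter> open_segment (v (k + 1)) (v (k + 2)) = {}) \<or>
          (card (S \<inter> closed_segment (v (k + 1)) (v (k + 2))) = 2 \<and>
             S \<inter> open_segment (v k) (v (k + 1)) = {})))"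

definition angle_at :: "complex \<Rightarrow> complex \<Rightarrow> complex \<Rightarrow> real" where
  "angle_at c0 p q = arccos (((p - c0) \<bullet> (q - c0)) / (norm (p - c0) * norm (q - c0)))"

text \<open>S is Equiangular w.r.t. center O: listing S as p_0..p_{n-1} in counterclockwise
  cyclic order around O (arguments a_0 < ... < a_{n-1} < a_0 + 2 pi), every angle
  p_i O p_{i+1} (indices mod n) equals 2 pi / n.\<close>
definition Equiangular :: "complex set \<Rightarrow> complex \<Rightarrow> bool" where
  "Equiangular S c0 \<longleftrightarrow>
     (let n = card S in
      \<exists>p :: nat \<Rightarrow> complex. \<exists>a :: nat \<Rightarrow> real.
        bij_betw p {..<n} S \<and>
        (\<forall>i<n. p i = c0 + complex_of_real (norm (p i - c0)) * cis (a i)) \<and>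
        (\<forall>i j. i < j \<and> j < n \<longrightarrow> a i < a j) \<and>
        (\<forall>i<n. a i < a 0 + 2 * pi) \<and>
        (\<forall>i<n. angle_at c0 (p i) (p ((i + 1) mod n)) = 2 * pi / real n))"

end

theory Submission
  imports Defs
begin


lemma cos_add_int_2pi: "cos (x + 2 * pi * of_int (q::int)) = cos (x::real)"
  by (simp add: cos_add)

lemma cos_lt_pin:
  fixes n :: nat and x :: real
  assumes "n \<ge> 3" "pi / n < x" "x < 2*pi - pi/n"
  shows "cos x < cos (pi / n)"
proof -
  have n0: "real n > 0" using assms by simp
  have a0: "0 \<le> pi/n" "pi/n \<le> pi" using n0 by (auto simp: field_simps)
  show ?thesis
  proof (cases "x \<le> pi")
    case True
    then show ?thesis using cos_mono_less_eq[of x "pi/n"] a0 assms(2) by auto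
  next
    case False
    have "cos x = cos (2*pi - x)" by simp
    also have "\<dots> < cos (pi/n)" using cos_mono_less_eq[of "2*pi - x" "pi/n"] a0 assms False by auto
    finally show ?thesis .
  qed
qed

lemma cos_odd:
  fixes n :: nat and d :: int
  assumes "n \<ge> 3"
  shows "cos ((2*d - 1) * pi / n) \<le> cos (pi / n) \<and>
    (cos ((2*d - 1) * pi / n) = cos (pi / n) \<longrightarrow> d mod n = 0 \<or> d mod n = 1)"
proof -
  define d' where "d' = d mod n"
  define q where "q = d div n"
  have n0: "real n > 0" using assms by simp
  have dd: "d = d' + int n * q" unfolding d'_def q_def by simp
  have d'r: "0 \<le> d'" "d' < int n" unfolding d'_def using assms by auto
  have "(2*d - 1) * pi / n = (2*d' - 1) * pi / n + 2 * pi * of_int q"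
    using n0 by (simp add: dd field_simps)
  then have eq: "cos ((2*d - 1) * pi / n) = cos ((2*d' - 1) * pi / n)"
    by (simp add: cos_add_int_2pi)
  consider "d' = 0" | "d' = 1" | "d' \<ge> 2" using d'r by linarith
  then show ?thesis
  proof cases
    case 1
    then have "real_of_int (2*d' - 1) * pi / n = - (pi / n)" by simp
    then show ?thesis using eq 1 d'_def by simp
  next
    case 2
    then show ?thesis using eq d'_def by simp
  next
    case 3
    have r: "real_of_int d' \<ge> 2" "real_of_int d' \<le> real n - 1" using 3 d'r by linarith+
    have "pi / n < (2*d' - 1) * pi / n"
      using n0 r by (simp add: divide_strict_right_mono)
    moreover have "(2*d' - 1) * pi / n < 2*pi - pi/n"
    proof -
      have "(2*d' - 1) * pi \<le> (2*real n - 3) * pi" using r by (simp add: mult_right_mono)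
      also have "\<dots> < (2 * real n - 1) * pi" by simp
      finally show ?thesis using n0 by (simp add: field_simps)
    qed
    ultimately have "cos ((2*d' - 1) * pi / n) < cos (pi/n)" using cos_lt_pin assms by blast
    then show ?thesis using eq by simp
  qed
qed

lemma cis_add_nat_2pi: "cis (x + 2 * pi * real (m::nat)) = cis x"
  by (simp add: cis_mult[symmetric])

lemma rpoly_vertex_mod:
  assumes "n > 0"
  shows "rpoly_vertex c r th n (k mod n) = rpoly_vertex c r th n k"
proof -
  have "real k = real (k mod n) + real n * real (k div n)"
    by (metis of_nat_add of_nat_mult mod_div_mult_eq add.commute mult.commute)
  then have "th + 2 * pi * real k / real n = th + 2 * pi * real (k mod n) / real n + 2 * pi * real (k div n)"
    using assms by (simp add: field_simps)
  then have "cis (th + 2 * pi * real k / real n) = cis (th + 2 * pi * real (k mod n) / real n)"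
    by (metis cis_add_nat_2pi)
  then show ?thesis unfolding rpoly_vertex_def by simp
qed

lemma edir_mod:
  assumes "n > 0"
  shows "cis (th + 2 * pi * real (k mod n) / real n + pi / real n) = cis (th + 2 * pi * real k / real n + pi / real n)"
proof -
  have "real k = real (k mod n) + real n * real (k div n)"
    by (metis of_nat_add of_nat_mult mod_div_mult_eq add.commute mult.commute)
  then have "th + 2 * pi * real k / real n + pi / real n = (th + 2 * pi * real (k mod n) / real n + pi / real n) + 2 * pi * real (k div n)"
    using assms by (simp add: field_simps)
  then show ?thesis by (metis cis_add_nat_2pi)
qed

lemma cis_cnj_mult: "cis a * cnj (cis b) = cis (a - b)"
  by (simp add: cis_cnj cis_mult)

lemma supp_vertex:
  assumes "n > 0"
  shows "Re ((rpoly_vertex c r th n j - c) * cnj (cis (th + 2 * pi * real k / real n + pi / real n)))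
     = r * cos ((2 * (int j - int k) - 1) * pi / n)"
proof -
  have "(rpoly_vertex c r th n j - c) * cnj (cis (th + 2 * pi * real k / real n + pi / real n))
     = complex_of_real r * cis ((th + 2 * pi * real j / real n) - (th + 2 * pi * real k / real n + pi / real n))"
    unfolding rpoly_vertex_def by (simp add: mult.assoc cis_cnj_mult)
  moreover have "(th + 2 * pi * real j / real n) - (th + 2 * pi * real k / real n + pi / real n)
     = (2 * (int j - int k) - 1) * pi / n"
    using assms by (simp add: field_simps)
  ultimately show ?thesis by simp
qed

lemma supp_le:
  assumes "n \<ge> 3" "r > 0"
  shows "Re ((rpoly_vertex c r th n j - c) * cnj (cis (th + 2 * pi * real k / real n + pi / real n))) \<le> r * cos (pi / n)"
    and "Re ((rpoly_vertex c r th n j - c) * cnj (cis (th + 2 * pi * real k / real n + pi / real n))) = r * cos (pi / n)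
       \<Longrightarrow> (int j - int k) mod int n = 0 \<or> (int j - int k) mod int n = 1"
  using supp_vertex[of n c r th j k] cos_odd[OF assms(1), of "int j - int k"] assms
  by (auto simp: mult_left_mono)

lemma mod_diff_nat:
  fixes j k n :: nat
  assumes "j < n" "k < n"
  shows "(int j - int k) mod int n = (if k \<le> j then int j - int k else int j - int k + int n)"
proof (cases "k \<le> j")
  case True
  then show ?thesis using assms by (simp add: mod_pos_pos_trivial)
next
  case False
  have "(int j - int k) mod int n = (int j - int k + int n) mod int n" by simp
  also have "\<dots> = int j - int k + int n" using assms False by (intro mod_pos_pos_trivial) auto
  finally show ?thesis using False by simp
qed

lemma vertex_inj:
  assumes "n \<ge> 3" "r > 0" "j < n" "k < n" "rpoly_vertex c r th n j = rpoly_vertex c r th n k"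
  shows "j = k"
proof -
  have n0: "n > 0" using assms by simp
  have a: "Re ((rpoly_vertex c r th n j - c) * cnj (cis (th + 2 * pi * real k / real n + pi / real n))) = r * cos (pi / n)"
    using assms(5) supp_vertex[OF n0, of c r th k k] by simp
  have b: "Re ((rpoly_vertex c r th n k - c) * cnj (cis (th + 2 * pi * real j / real n + pi / real n))) = r * cos (pi / n)"
    using assms(5)[symmetric] supp_vertex[OF n0, of c r th j j] by simp
  from supp_le(2)[OF assms(1,2) a] supp_le(2)[OF assms(1,2) b] show ?thesis
    using mod_diff_nat[OF assms(3,4)] mod_diff_nat[OF assms(4,3)] assms(1)
    by (auto split: if_splits)
qed

lemma mod_small:
  fixes D :: int
  assumes "n \<ge> 2" "- int n < D" "D \<le> int n"
  shows "(D mod int n = 0 \<longleftrightarrow> D = 0 \<or> D = int n) \<and> (D mod int n = 1 \<longleftrightarrow> D = 1 \<or> D = 1 - int n)"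
proof -
  consider "D < 0" | "D = int n" | "0 \<le> D" "D < int n" using assms by linarith
  then show ?thesis
  proof cases
    case 1
    have "D mod int n = (D + int n) mod int n" by simp
    also have "\<dots> = D + int n" using 1 assms by (intro mod_pos_pos_trivial) auto
    finally show ?thesis using 1 assms by auto
  next
    case 2 then show ?thesis using assms by auto
  next
    case 3 then show ?thesis using assms by (auto simp: mod_pos_pos_trivial)
  qed
qed

lemma seg_param:
  assumes "z \<in> closed_segment a b"
  shows "\<exists>t. 0 \<le> t \<and> t \<le> 1 \<and> z = complex_of_real (1 - t) * a + complex_of_real t * b \<and>
    (\<forall>E c. Re ((z - c) * cnj E) = (1 - t) * Re ((a - c) * cnj E) + t * Re ((b - c) * cnj E))"
proof -
  obtain t where t: "0 \<le> t" "t \<le> 1" "z = (1 - t) *\<^sub>R a + t *\<^sub>R b"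
    using assms unfolding closed_segment_def by auto
  have z: "z = complex_of_real (1 - t) * a + complex_of_real t * b" using t(3) by (simp add: scaleR_conv_of_real)
  have "\<forall>E c. Re ((z - c) * cnj E) = (1 - t) * Re ((a - c) * cnj E) + t * Re ((b - c) * cnj E)"
  proof (intro allI)
    fix E c
    have "z - c = complex_of_real (1 - t) * (a - c) + complex_of_real t * (b - c)"
      using z by (simp add: algebra_simps)
    then have "(z - c) * cnj E = complex_of_real (1 - t) * ((a - c) * cnj E) + complex_of_real t * ((b - c) * cnj E)"
      by (simp only: ring_distribs mult.assoc)
    then show "Re ((z - c) * cnj E) = (1 - t) * Re ((a - c) * cnj E) + t * Re ((b - c) * cnj E)"
      by simp
  qed
  then show ?thesis using t z by blast
qed

definition edir :: "real \<Rightarrow> nat \<Rightarrow> nat \<Rightarrow> complex" where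
  "edir th n k = cis (th + 2 * pi * real k / real n + pi / real n)"

lemma supp_self:
  assumes "n \<ge> 3"
  shows "Re ((rpoly_vertex c r th n k - c) * cnj (edir th n k)) = r * cos (pi / n)"
    and "Re ((rpoly_vertex c r th n (Suc k) - c) * cnj (edir th n k)) = r * cos (pi / n)"
proof -
  have n0: "n > 0" using assms by simp
  have "real_of_int (2 * (int k - int k) - 1) * pi / real n = - (pi / n)" by simp
  then show "Re ((rpoly_vertex c r th n k - c) * cnj (edir th n k)) = r * cos (pi / n)"
    using supp_vertex[OF n0, of c r th k k] unfolding edir_def by (simp only: cos_minus)
  have "real_of_int (2 * (int (Suc k) - int k) - 1) * pi / real n = pi / n" by simp
  then show "Re ((rpoly_vertex c r th n (Suc k) - c) * cnj (edir th n k)) = r * cos (pi / n)"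
    using supp_vertex[OF n0, of c r th "Suc k" k] unfolding edir_def by simp
qed

lemma seg_inter:
  fixes c :: complex and r th :: real and n j k :: nat
  defines "V \<equiv> rpoly_vertex c r th n"
  assumes "n \<ge> 3" "r > 0" "j < n" "k < n" "j \<noteq> k"
    "z \<in> closed_segment (V j) (V (Suc j))" "z \<in> closed_segment (V k) (V (Suc k))"
  shows "(k = Suc j mod n \<and> z = V k) \<or> (j = Suc k mod n \<and> z = V j)"
proof -
  define H where "H = r * cos (pi / n)"
  define sg where "sg = (\<lambda>x. Re ((x - c) * cnj (edir th n k)))"
  obtain t where t: "0 \<le> t" "t \<le> 1" "\<forall>E c. Re ((z - c) * cnj E) = (1 - t) * Re ((V k - c) * cnj E) + t * Re ((V (Suc k) - c) * cnj E)"
    using seg_param[OF assms(8)] by blast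
  have "sg z = (1 - t) * H + t * H" using t(3) supp_self[OF assms(2), of c r th k] unfolding sg_def H_def V_def by simp
  then have sz: "sg z = H" by (simp add: algebra_simps)
  obtain s where s: "0 \<le> s" "s \<le> 1" "z = complex_of_real (1 - s) * V j + complex_of_real s * V (Suc j)"
     "\<forall>E c. Re ((z - c) * cnj E) = (1 - s) * Re ((V j - c) * cnj E) + s * Re ((V (Suc j) - c) * cnj E)"
    using seg_param[OF assms(7)] by blast
  have A: "sg (V j) \<le> H" "sg (V j) = H \<Longrightarrow> (int j - int k) mod int n = 0 \<or> (int j - int k) mod int n = 1"
    using supp_le[OF assms(2,3), of c th j k] unfolding sg_def H_def V_def edir_def by auto
  have B: "sg (V (Suc j)) \<le> H" "sg (V (Suc j)) = H \<Longrightarrow> (int (Suc j) - int k) mod int n = 0 \<or> (int (Suc j) - int k) mod int n = 1"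
    using supp_le[OF assms(2,3), of c th "Suc j" k] unfolding sg_def H_def V_def edir_def by auto
  have comb: "(1 - s) * sg (V j) + s * sg (V (Suc j)) = H" using s(4) sz unfolding sg_def by simp
  have m1: "(int j - int k) mod int n = 0 \<longleftrightarrow> int j - int k = 0 \<or> int j - int k = int n"
     "(int j - int k) mod int n = 1 \<longleftrightarrow> int j - int k = 1 \<or> int j - int k = 1 - int n"
    using mod_small[of n "int j - int k"] assms(2,4,5) by auto
  have m2: "(int (Suc j) - int k) mod int n = 0 \<longleftrightarrow> int (Suc j) - int k = 0 \<or> int (Suc j) - int k = int n"
     "(int (Suc j) - int k) mod int n = 1 \<longleftrightarrow> int (Suc j) - int k = 1 \<or> int (Suc j) - int k = 1 - int n"
    using mod_small[of n "int (Suc j) - int k"] assms(2,4,5) by auto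
  have n0: "n > 0" using assms by simp
  have c1': "s < 1 \<Longrightarrow> int j - int k = 1 \<or> int j - int k = 1 - int n"
  proof -
    assume "s < 1"
    then have "sg (V j) = H"
    proof -
      have "(1 - s) * (H - sg (V j)) = s * (sg (V (Suc j)) - H)" using comb by (simp add: algebra_simps)
      also have "\<dots> \<le> 0" using B(1) s(1) by (simp add: mult_nonneg_nonpos)
      finally have "(1 - s) * (H - sg (V j)) \<le> 0" .
      then have "H - sg (V j) \<le> 0" using \<open>s < 1\<close> by (simp add: mult_le_0_iff)
      then show ?thesis using A(1) by linarith
    qed
    then show "int j - int k = 1 \<or> int j - int k = 1 - int n" using A(2) m1 assms(4,5,6) by auto
  qed
  have c1: "s < 1 \<Longrightarrow> j = Suc k mod n" using c1' assms(4,5) by (auto simp: mod_Suc)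
  have c2': "s > 0 \<Longrightarrow> int (Suc j) - int k = 0 \<or> int (Suc j) - int k = int n"
  proof -
    assume "s > 0"
    then have "sg (V (Suc j)) = H"
    proof -
      have "s * (H - sg (V (Suc j))) = (1 - s) * (sg (V j) - H)" using comb by (simp add: algebra_simps)
      also have "\<dots> \<le> 0" using A(1) s(2) by (simp add: mult_nonneg_nonpos)
      finally have "s * (H - sg (V (Suc j))) \<le> 0" .
      then have "H - sg (V (Suc j)) \<le> 0" using \<open>s > 0\<close> by (simp add: mult_le_0_iff)
      then show ?thesis using B(1) by linarith
    qed
    then show "int (Suc j) - int k = 0 \<or> int (Suc j) - int k = int n" using B(2) m2 assms(4,5,6) by auto
  qed
  have c2: "s > 0 \<Longrightarrow> k = Suc j mod n" using c2' assms(4,5) by (auto simp: mod_Suc)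
  have "\<not> (0 < s \<and> s < 1)"
  proof
    assume "0 < s \<and> s < 1"
    then have "int j - int k = 1 \<or> int j - int k = 1 - int n" "int (Suc j) - int k = 0 \<or> int (Suc j) - int k = int n"
      using c1' c2' by auto
    then show False using assms(2) by auto
  qed
  then have "s = 0 \<or> s = 1" using s(1,2) by linarith
  then show ?thesis
  proof
    assume "s = 0"
    then have "z = V j" using s(3) by simp
    moreover have "j = Suc k mod n" using c1 \<open>s = 0\<close> by simp
    ultimately show ?thesis by blast
  next
    assume "s = 1"
    then have k: "k = Suc j mod n" using c2 by simp
    have "z = V (Suc j)" using s(3) \<open>s = 1\<close> by simp
    moreover have "V (Suc j) = V (Suc j mod n)" unfolding V_def by (rule rpoly_vertex_mod[OF n0, symmetric])
    ultimately have "z = V k" using k by simp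
    then show ?thesis using k by blast
  qed
qed



lemma pred_mod:
  fixes k n :: nat
  assumes "k < n"
  shows "(k + n - 1) mod n < n" "Suc ((k + n - 1) mod n) mod n = k"
proof -
  show "(k + n - 1) mod n < n" using assms by simp
  show "Suc ((k + n - 1) mod n) mod n = k"
  proof (cases "k = 0")
    case True
    then have "(k + n - 1) mod n = n - 1" using assms by simp
    then show ?thesis using True assms by simp
  next
    case False
    then have "k + n - 1 = (k - 1) + n" by simp
    then have "(k + n - 1) mod n = (k - 1) mod n" by simp
    also have "\<dots> = k - 1" using assms False by simp
    finally show ?thesis using assms False by simp
  qed
qed

lemma vertex_suc_ne:
  assumes "n \<ge> 3" "r > 0" "k < n"
  shows "rpoly_vertex c r th n k \<noteq> rpoly_vertex c r th n (Suc k)"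
proof
  assume eq: "rpoly_vertex c r th n k = rpoly_vertex c r th n (Suc k)"
  have n0: "n > 0" using assms by simp
  have "rpoly_vertex c r th n (Suc k) = rpoly_vertex c r th n (Suc k mod n)"
    by (rule rpoly_vertex_mod[OF n0, symmetric])
  then have "k = Suc k mod n" using vertex_inj[OF assms(1,2,3), of "Suc k mod n" c th] eq n0 by simp
  moreover have "Suc k mod n = (if Suc k = n then 0 else Suc k)" using assms(3) by (auto simp: mod_Suc)
  ultimately show False using assms(1) by (cases "Suc k = n") simp_all
qed

lemma cover_S:
  fixes S :: "complex set" and c :: complex and r th :: real and n :: nat
  defines "V \<equiv> rpoly_vertex c r th n"
  assumes fin: "finite S" and cardS: "card S = n" and n3: "n \<ge> 3" and r0: "r > 0"
    and Fdef: "F = {k. k < n \<and> card (S \<inter> closed_segment (V k) (V (Suc k))) = 2}"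
    and cov: "\<forall>k<n. k \<in> F \<or> Suc k mod n \<in> F"
  shows "S \<subseteq> (\<Union>k\<in>F. closed_segment (V k) (V (Suc k)))"
proof -
  define T where "T k = S \<inter> closed_segment (V k) (V (Suc k))" for k
  have n0: "n > 0" using n3 by simp
  have Vmod: "V (m mod n) = V m" for m unfolding V_def by (rule rpoly_vertex_mod[OF n0])
  have "\<forall>k\<in>F. \<exists>p. fst p \<in> T k \<and> snd p \<in> T k \<and> fst p \<noteq> snd p \<and> fst p \<noteq> V (Suc k) \<and> snd p \<noteq> V k"
  proof
    fix k assume kF: "k \<in> F"
    then have "card (T k) = 2" "k < n" unfolding Fdef T_def by auto
    then obtain x y where xy: "x \<noteq> y" "T k = {x, y}" by (auto simp: card_2_iff)
    have ne: "V k \<noteq> V (Suc k)" unfolding V_def using vertex_suc_ne[OF n3 r0 \<open>k < n\<close>] .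
    show "\<exists>p. fst p \<in> T k \<and> snd p \<in> T k \<and> fst p \<noteq> snd p \<and> fst p \<noteq> V (Suc k) \<and> snd p \<noteq> V k"
    proof (cases "x \<noteq> V (Suc k) \<and> y \<noteq> V k")
      case True
      then show ?thesis using xy by (intro exI[of _ "(x, y)"]) auto
    next
      case False
      have h1: "y \<noteq> V (Suc k)" using False xy(1) ne by metis
      have h2: "x \<noteq> V k" using False xy(1) ne by metis
      show ?thesis using xy h1 h2 by (intro exI[of _ "(y, x)"]) simp
    qed
  qed
  from bchoice[OF this] obtain P where P: "\<forall>k\<in>F. fst (P k) \<in> T k \<and> snd (P k) \<in> T k \<and> fst (P k) \<noteq> snd (P k) \<and>
      fst (P k) \<noteq> V (Suc k) \<and> snd (P k) \<noteq> V k"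
    by blast
  define pr where "pr k = (k + n - 1) mod n" for k
  have pr: "k < n \<Longrightarrow> pr k < n \<and> Suc (pr k) mod n = k" for k using pred_mod[of k n] unfolding pr_def by auto
  have prF: "pr k \<in> F" if "k < n" "k \<notin> F" for k
  proof -
    have "pr k < n" "Suc (pr k) mod n = k" using pr[OF that(1)] by auto
    then show ?thesis using cov that(2) by metis
  qed
  have Fn: "k \<in> F \<Longrightarrow> k < n" for k using Fdef by simp
  define m where "m k = (if k \<in> F then k else pr k)" for k
  define g where "g k = (if k \<in> F then fst (P k) else snd (P (pr k)))" for k
  have mF: "k < n \<Longrightarrow> m k \<in> F \<and> m k < n" for k unfolding m_def using prF pr Fn by auto
  have gT: "k < n \<Longrightarrow> g k \<in> T (m k)" for k unfolding g_def m_def using P prF by auto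
  have inj: "inj_on g {..<n}"
  proof (rule inj_onI, rule ccontr)
    fix j k assume j: "j \<in> {..<n}" and k: "k \<in> {..<n}" and eq: "g j = g k" and jk: "j \<noteq> k"
    have jn: "j < n" and kn: "k < n" using j k by auto
    have segs: "g j \<in> closed_segment (V (m j)) (V (Suc (m j)))" "g j \<in> closed_segment (V (m k)) (V (Suc (m k)))"
      using gT[OF jn] gT[OF kn] eq unfolding T_def by auto
    have mn: "m j < n" "m k < n" "m j \<in> F" "m k \<in> F" using mF jn kn by auto
    show False
    proof (cases "m j = m k")
      case True
      show False
      proof (cases "j \<in> F"; cases "k \<in> F")
        assume "j \<in> F" "k \<in> F" then show False using True jk unfolding m_def by simp
      next
        assume a: "j \<in> F" "k \<notin> F"
        then have "g j = fst (P (m k))" "g k = snd (P (m k))" using True unfolding g_def m_def by auto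
        then show False using eq P mn by auto
      next
        assume a: "j \<notin> F" "k \<in> F"
        then have "g j = snd (P (m k))" "g k = fst (P (m k))" using True unfolding g_def m_def by auto
        then show False using eq P mn by auto
      next
        assume a: "j \<notin> F" "k \<notin> F"
        then have "pr j = pr k" using True unfolding m_def by simp
        then show False using pr[OF jn] pr[OF kn] jk by metis
      qed
    next
      case False
      note SI = seg_inter[OF n3 r0 mn(1,2) False, where z = "g j" and c = c and th = th, folded V_def, OF segs]
      have gv: "g j \<noteq> V (Suc (m j))" if "j \<in> F" using that P eq mn unfolding g_def m_def by auto
      have gv': "g j \<noteq> V (Suc (m k))" if "k \<in> F" using that P eq mn unfolding g_def m_def by auto
      have gl: "g j \<noteq> V (m j)" if "j \<notin> F" using that P eq mn unfolding g_def m_def by auto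
      have gl': "g j \<noteq> V (m k)" if "k \<notin> F" using that P eq mn unfolding g_def m_def by auto
      show False
      proof (cases "m k = Suc (m j) mod n \<and> g j = V (m k)")
        case True
        then have A: "g j = V (Suc (m j))" using Vmod by metis
        have "k \<in> F" using True gl' by blast
        then have mk: "m k = k" unfolding m_def by simp
        show False
        proof (cases "j \<in> F")
          case True then show False using gv A by blast
        next
          case False
          then have "m j = pr j" unfolding m_def by simp
          then have "m k = j" using pr[OF jn] \<open>m k = Suc (m j) mod n \<and> g j = V (m k)\<close> by simp
          then show False using mk jk by simp
        qed
      next
        case False
        then have T2: "m j = Suc (m k) mod n" "g j = V (m j)" using SI by auto
        then have A: "g j = V (Suc (m k))" using Vmod by metis
        have "j \<in> F" using T2 gl by blast
        then have mj: "m j = j" unfolding m_def by simp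
        show False
        proof (cases "k \<in> F")
          case True then show False using gv' A by blast
        next
          case False
          then have "m k = pr k" unfolding m_def by simp
          then have "m j = k" using pr[OF kn] T2 by simp
          then show False using mj jk by simp
        qed
      qed
    qed
  qed
  have gS: "g ` {..<n} \<subseteq> S" using gT unfolding T_def by auto
  have "card (g ` {..<n}) = n" using inj by (simp add: card_image)
  then have "g ` {..<n} = S" using card_subset_eq[OF fin gS] cardS by simp
  then show ?thesis using gT mF unfolding T_def by fastforce
qed



lemma core_real:
  fixes a q s1 s2 w cs sn :: real
  assumes cs: "0 < cs" and sn: "0 < sn" and pyth: "cs^2 + sn^2 = 1"
    and a0: "a \<ge> 0" and s12: "s1 < s2" and s1w: "-w \<le> s1" and s2w: "s2 \<le> w"
    and U: "a^2 + (s1-q)^2 > 0" and W: "a^2 + (s2 - q)^2 > 0"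
    and hyp: "a^2 + (s1-q)*(s2-q) \<le> sqrt (a^2 + (s1-q)^2) * sqrt (a^2 + (s2-q)^2) * cs"
  shows "a^2 + q^2 - w^2 \<le> 2*a*w*(cs/sn)"
    and "a > 0 \<Longrightarrow> a^2 + q^2 - w^2 = 2*a*w*(cs/sn) \<Longrightarrow> s1 = -w \<and> s2 = w"
proof -
  define k where "k = cs / sn"
  have k0: "k > 0" unfolding k_def using cs sn by simp
  define dot where "dot = a^2 + (s1-q)*(s2-q)"
  define cr where "cr = a * (s2 - s1)"
  have cr0: "cr \<ge> 0" unfolding cr_def using a0 s12 by simp
  have lag: "(a^2 + (s1-q)^2) * (a^2 + (s2-q)^2) = dot^2 + cr^2"
    unfolding dot_def cr_def by (simp add: power2_eq_square algebra_simps)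
  have st1: "dot * sn \<le> cr * cs"
  proof (cases "dot \<le> 0")
    case True
    then have "dot * sn \<le> 0" using sn by (simp add: mult_nonpos_nonneg)
    also have "0 \<le> cr * cs" using cr0 cs by simp
    finally show ?thesis .
  next
    case False
    have h: "dot \<le> sqrt ((a^2 + (s1-q)^2) * (a^2 + (s2-q)^2)) * cs" using hyp unfolding dot_def
      by (simp add: real_sqrt_mult)
    have "dot^2 \<le> (sqrt ((a^2 + (s1-q)^2) * (a^2 + (s2-q)^2)) * cs)^2"
      using h False by (intro power_mono) auto
    also have "\<dots> = (dot^2 + cr^2) * cs^2" using U W lag by (simp add: power_mult_distrib)
    finally have h2: "dot^2 \<le> (dot^2 + cr^2) * cs^2" .
    have sn2: "sn^2 = 1 - cs^2" using pyth by simp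
    have "(dot * sn)^2 = dot^2 * sn^2" by (simp only: power_mult_distrib)
    also have "\<dots> = dot^2 - dot^2 * cs^2" unfolding sn2 by (simp only: right_diff_distrib mult_1_right)
    also have "\<dots> \<le> cr^2 * cs^2" using h2 unfolding distrib_right by linarith
    also have "\<dots> = (cr * cs)^2" by (simp only: power_mult_distrib)
    finally have "(dot * sn)^2 \<le> (cr * cs)^2" .
    then show ?thesis by (rule power2_le_imp_le) (use cr0 cs in simp)
  qed
  define E where "E x y = a^2 + (x - q)*(y - q) - a*k*(y - x)" for x y
  have E12: "E s1 s2 \<le> 0"
  proof -
    have "dot \<le> cr * k" using st1 sn unfolding k_def by (simp add: field_simps)
    then show ?thesis unfolding E_def dot_def cr_def by (simp add: algebra_simps)
  qed
  define L where "L = (s1 - q) - a*k"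
  have Elin: "E s1 t = E s1 s1 + (t - s1) * L" for t unfolding E_def L_def by (simp add: algebra_simps)
  have E11: "E s1 s1 > 0" using U unfolding E_def by (simp add: power2_eq_square)
  have "(s2 - s1) * L < 0" using Elin[of s2] E12 E11 by linarith
  then have L0: "L < 0" using s12 by (simp add: mult_less_0_iff)
  have E1w: "E s1 w \<le> E s1 s2"
  proof -
    have "(w - s2) * L \<le> 0" using s2w L0 by (simp add: mult_nonneg_nonpos)
    moreover have "(w - s1) * L = (s2 - s1) * L + (w - s2) * L" by (simp add: algebra_simps)
    ultimately show ?thesis using Elin[of w] Elin[of s2] by linarith
  qed
  define L' where "L' = (w - q) + a*k"
  have Elin': "E t w = E w w + (t - w) * L'" for t unfolding E_def L'_def by (simp add: algebra_simps)
  have Eww: "E w w = a^2 + (w - q)^2" unfolding E_def by (simp add: power2_eq_square)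
  have "(s1 - w) * L' \<le> 0" using Elin'[of s1] Eww E1w E12 by (smt (verit) zero_le_power2)
  then have L'0: "L' \<ge> 0" using s12 s2w by (simp add: mult_le_0_iff)
  have Emw: "E (-w) w \<le> E s1 w"
  proof -
    have "(-w - s1) * L' \<le> 0" using s1w L'0 by (simp add: mult_nonpos_nonneg)
    moreover have "(-w - w) * L' = (s1 - w) * L' + (-w - s1) * L'" by (simp add: algebra_simps)
    ultimately show ?thesis using Elin'[of "-w"] Elin'[of s1] by linarith
  qed
  have Emw_eq: "E (-w) w = a^2 + q^2 - w^2 - 2*a*w*k" unfolding E_def by (simp add: power2_eq_square algebra_simps)
  show "a^2 + q^2 - w^2 \<le> 2*a*w*(cs/sn)" using Emw E1w E12 Emw_eq unfolding k_def by linarith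
  assume apos: "a > 0" and eq: "a^2 + q^2 - w^2 = 2*a*w*(cs/sn)"
  then have z: "E (-w) w = 0" using Emw_eq unfolding k_def by simp
  then have e1: "E s1 w = E s1 s2" and e2: "E (-w) w = E s1 w" using Emw E1w E12 by linarith+
  have "(w - s1) * L = (s2 - s1) * L + (w - s2) * L" by (simp add: algebra_simps)
  then have "(w - s2) * L = 0" using e1 Elin[of w] Elin[of s2] by linarith
  then have "s2 = w" using L0 by simp
  have "(s1 - w) * L' = E s1 w - E w w" using Elin'[of s1] by linarith
  also have "\<dots> < 0" using e1 e2 z Eww apos by (smt (verit) zero_less_power2 zero_le_power2)
  finally have "L' > 0" using s12 s2w by (simp add: mult_less_0_iff)
  have "(-w - w) * L' = (s1 - w) * L' + (-w - s1) * L'" by (simp add: algebra_simps)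
  then have "(-w - s1) * L' = 0" using e2 Elin'[of "-w"] Elin'[of s1] by linarith
  then have "s1 = -w" using \<open>L' > 0\<close> by simp
  then show "s1 = -w \<and> s2 = w" using \<open>s2 = w\<close> by simp
qed

lemma core_local:
  fixes X Y P :: complex and h w cs sn :: real
  assumes h0: "h > 0" and w0: "w > 0" and hw: "h^2 + w^2 = 1" and csd: "cs = h^2 - w^2" and snd: "sn = 2*w*h"
    and cs0: "cs > 0"
    and RX: "Re X = h" and RY: "Re Y = h" and IX: "\<bar>Im X\<bar> \<le> w" and IY: "\<bar>Im Y\<bar> \<le> w"
    and XY: "X \<noteq> Y" and XP: "X \<noteq> P" and YP: "Y \<noteq> P" and RP: "Re P \<le> h"
    and ang: "Re ((X - P) * cnj (Y - P)) \<le> cmod (X - P) * cmod (Y - P) * cs"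
  shows "cmod P ^ 2 \<le> Re P / h"
    and "P = 0 \<Longrightarrow> (Im X = -w \<and> Im Y = w) \<or> (Im X = w \<and> Im Y = -w)"
proof -
  define p q where "p = Re P" and "q = Im P"
  define a where "a = h - p"
  have a0: "a \<ge> 0" unfolding a_def p_def using RP by simp
  have sn0: "sn > 0" unfolding snd using h0 w0 by simp
  have pyth: "cs^2 + sn^2 = 1"
  proof -
    have "cs^2 + sn^2 = (h^2 + w^2)^2" unfolding csd snd by (simp add: power2_eq_square algebra_simps)
    then show ?thesis using hw by simp
  qed
  have cm: "cmod (Z - P) = sqrt (a^2 + (Im Z - q)^2)" if "Re Z = h" for Z
    unfolding cmod_def a_def p_def q_def using that by simp
  have re: "Re ((Z1 - P) * cnj (Z2 - P)) = a^2 + (Im Z1 - q) * (Im Z2 - q)" if "Re Z1 = h" "Re Z2 = h" for Z1 Z2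
    unfolding a_def p_def q_def using that by (simp add: power2_eq_square algebra_simps)
  have nz: "a^2 + (Im Z - q)^2 > 0" if "Re Z = h" "Z \<noteq> P" for Z
  proof -
    have "a \<noteq> 0 \<or> Im Z \<noteq> q" using that unfolding a_def p_def q_def by (metis complex_eqI diff_self eq_iff_diff_eq_0)
    then show ?thesis by (auto simp: add_pos_nonneg add_nonneg_pos)
  qed
  have key: "a^2 + q^2 - w^2 \<le> 2*a*w*(cs/sn) \<and> (a > 0 \<longrightarrow> a^2 + q^2 - w^2 = 2*a*w*(cs/sn) \<longrightarrow> (Im X = -w \<and> Im Y = w) \<or> (Im X = w \<and> Im Y = -w))"
  proof (cases "Im X < Im Y")
    case True
    have h: "a^2 + (Im X - q)*(Im Y - q) \<le> sqrt (a^2 + (Im X - q)^2) * sqrt (a^2 + (Im Y - q)^2) * cs"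
      using ang re[OF RX RY] cm[OF RX] cm[OF RY] by simp
    note cr = core_real[OF cs0 sn0 pyth a0 True _ _ nz[OF RX XP] nz[OF RY YP] h]
    show ?thesis using cr IX IY by auto
  next
    case False
    then have lt: "Im Y < Im X" using XY RX RY by (metis complex_eqI linorder_neqE_linordered_idom)
    have h: "a^2 + (Im Y - q)*(Im X - q) \<le> sqrt (a^2 + (Im Y - q)^2) * sqrt (a^2 + (Im X - q)^2) * cs"
      using ang re[OF RX RY] cm[OF RX] cm[OF RY] by (simp add: mult.commute mult.left_commute)
    note cr = core_real[OF cs0 sn0 pyth a0 lt _ _ nz[OF RY YP] nz[OF RX XP] h]
    show ?thesis using cr IX IY by auto
  qed
  have fac: "2*a*w*(cs/sn) = a * cs / h" unfolding snd using w0 h0 by (simp add: field_simps)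
  have "p^2 + q^2 \<le> p / h"
  proof -
    have "a^2 + q^2 - w^2 \<le> a * cs / h" using key fac by simp
    then have "h * (a^2 + q^2 - w^2) \<le> a * cs" using h0 by (simp add: field_simps)
    moreover have "a * cs - h * (a^2 + q^2 - w^2) = p * (h^2 + w^2) - h * (p^2 + q^2)"
      unfolding a_def csd by (simp add: power2_eq_square algebra_simps)
    ultimately have "h * (p^2 + q^2) \<le> p" using hw by simp
    then show ?thesis using h0 by (simp add: field_simps)
  qed
  then show "cmod P ^ 2 \<le> Re P / h" unfolding p_def q_def by (simp add: cmod_power2)
  assume "P = 0"
  then have "p = 0" "q = 0" "a = h" unfolding p_def q_def a_def by auto
  moreover have "h^2 - w^2 = h * cs / h" using h0 csd by simp
  ultimately show "(Im X = -w \<and> Im Y = w) \<or> (Im X = w \<and> Im Y = -w)" using key fac h0 csd by auto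
qed



lemma vert_loc:
  assumes "n > 0"
  shows "(rpoly_vertex c r th n j - c) * cnj (edir th n k)
     = complex_of_real r * cis ((2 * (int j - int k) - 1) * pi / n)"
proof -
  have "(rpoly_vertex c r th n j - c) * cnj (edir th n k)
     = complex_of_real r * cis ((th + 2 * pi * real j / real n) - (th + 2 * pi * real k / real n + pi / real n))"
    unfolding rpoly_vertex_def edir_def by (simp add: mult.assoc cis_cnj_mult)
  moreover have "(th + 2 * pi * real j / real n) - (th + 2 * pi * real k / real n + pi / real n)
     = (2 * (int j - int k) - 1) * pi / n"
    using assms by (simp add: field_simps)
  ultimately show ?thesis by simp
qed

lemma trig_facts:
  fixes n :: nat
  assumes "n \<ge> 5"
  shows "cos (pi / n) > 0" "sin (pi / n) > 0" "cos (pi/n)^2 + sin (pi/n)^2 = 1"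
    "cos (2*pi/n) = cos (pi/n)^2 - sin (pi/n)^2" "sin (2*pi/n) = 2 * sin (pi/n) * cos (pi/n)"
    "cos (2*pi/n) > 0"
proof -
  have n0: "real n \<ge> 5" using assms by simp
  have a: "0 < pi / n" "pi / n < pi / 2" using n0 by (auto simp: field_simps)
  show "cos (pi / n) > 0" using a by (intro cos_gt_zero) auto
  show "sin (pi / n) > 0" using a pi_gt_zero by (intro sin_gt_zero) linarith+
  show "cos (pi/n)^2 + sin (pi/n)^2 = 1" by simp
  show "cos (2*pi/n) = cos (pi/n)^2 - sin (pi/n)^2" using cos_double[of "pi/n"] by simp
  show "sin (2*pi/n) = 2 * sin (pi/n) * cos (pi/n)" using sin_double[of "pi/n"] by simp
  have b: "2*pi/n < pi/2" using n0 by (auto simp: field_simps)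
  have b0: "0 < 2*pi/n" using n0 by simp
  show "cos (2*pi/n) > 0" using b b0 by (intro cos_gt_zero) auto
qed

lemma core_complex:
  fixes c Oc x y :: complex and r th :: real and n k :: nat
  defines "V \<equiv> rpoly_vertex c r th n" and "e \<equiv> edir th n k"
  assumes n5: "n \<ge> 5" and r0: "r > 0"
    and xs: "x \<in> closed_segment (V k) (V (Suc k))" and ys: "y \<in> closed_segment (V k) (V (Suc k))"
    and xy: "x \<noteq> y" and xO: "x \<noteq> Oc" and yO: "y \<noteq> Oc"
    and inner: "Re ((Oc - c) * cnj e) \<le> r * cos (pi / n)"
    and ang: "Re ((x - Oc) * cnj (y - Oc)) \<le> cmod (x - Oc) * cmod (y - Oc) * cos (2*pi/n)"
  shows "cmod (Oc - c)^2 \<le> (r / cos (pi / n)) * Re ((Oc - c) * cnj e)"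
    and "Oc = c \<Longrightarrow> (x = V k \<and> y = V (Suc k)) \<or> (x = V (Suc k) \<and> y = V k)"
proof -
  have n0: "n > 0" using n5 by simp
  define h w where "h = cos (pi / n)" and "w = sin (pi / n)"
  note tf = trig_facts[OF n5, folded h_def w_def]
  have ee: "e * cnj e = 1" unfolding e_def edir_def by (simp add: cis_cnj cis_mult)
  have ee': "cnj e * e = 1" using ee by (simp add: mult.commute)
  have ne: "cmod e = 1" unfolding e_def edir_def by simp
  define loc where "loc z = (z - c) * cnj e / complex_of_real r" for z
  have bk: "z - c = complex_of_real r * e * loc z" for z
  proof -
    have "complex_of_real r * e * ((z - c) * cnj e / complex_of_real r) = (z - c) * (e * cnj e)"
      using r0 by (simp add: field_simps)
    then show ?thesis unfolding loc_def using ee by simp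
  qed
  have l0: "loc (V k) = cis (- (pi / n))"
    using vert_loc[OF n0, of c r th k k] r0 unfolding loc_def V_def e_def by simp
  have l1: "loc (V (Suc k)) = cis (pi / n)"
    using vert_loc[OF n0, of c r th "Suc k" k] r0 unfolding loc_def V_def e_def by simp
  have segloc: "\<exists>t. 0 \<le> t \<and> t \<le> 1 \<and> z = complex_of_real (1 - t) * V k + complex_of_real t * V (Suc k) \<and>
      Re (loc z) = h \<and> Im (loc z) = (2 * t - 1) * w" if zs: "z \<in> closed_segment (V k) (V (Suc k))" for z
  proof -
    obtain t where t: "0 \<le> t" "t \<le> 1" "z = complex_of_real (1 - t) * V k + complex_of_real t * V (Suc k)"
      using seg_param[OF zs] by blast
    have "loc z = complex_of_real (1 - t) * loc (V k) + complex_of_real t * loc (V (Suc k))"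
      unfolding loc_def t(3) using r0 by (simp add: field_simps)
    then have lz: "loc z = complex_of_real (1 - t) * cis (- (pi / n)) + complex_of_real t * cis (pi / n)"
      using l0 l1 by simp
    have "Re (loc z) = h" "Im (loc z) = (2 * t - 1) * w" unfolding lz h_def w_def by (simp_all add: algebra_simps)
    then show ?thesis using t by blast
  qed
  obtain t1 where t1: "0 \<le> t1" "t1 \<le> 1" "x = complex_of_real (1 - t1) * V k + complex_of_real t1 * V (Suc k)"
      "Re (loc x) = h" "Im (loc x) = (2 * t1 - 1) * w" using segloc[OF xs] by blast
  obtain t2 where t2: "0 \<le> t2" "t2 \<le> 1" "y = complex_of_real (1 - t2) * V k + complex_of_real t2 * V (Suc k)"
      "Re (loc y) = h" "Im (loc y) = (2 * t2 - 1) * w" using segloc[OF ys] by blast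
  have locinj: "loc z1 = loc z2 \<Longrightarrow> z1 = z2" for z1 z2
  proof -
    assume "loc z1 = loc z2"
    then have "z1 - c = z2 - c" using bk[of z1] bk[of z2] by simp
    then show "z1 = z2" by simp
  qed
  define P where "P = loc Oc"
  have diff: "z - Oc = complex_of_real r * e * (loc z - P)" for z
  proof -
    have "z - Oc = (z - c) - (Oc - c)" by simp
    also have "\<dots> = complex_of_real r * e * loc z - complex_of_real r * e * P"
      unfolding P_def by (simp only: bk[of z, symmetric] bk[of Oc, symmetric])
    also have "\<dots> = complex_of_real r * e * (loc z - P)" by (simp add: algebra_simps)
    finally show ?thesis .
  qed
  have cmd: "cmod (z - Oc) = r * cmod (loc z - P)" for z
    using diff[of z] r0 ne by (simp add: norm_mult)
  have red: "Re ((x - Oc) * cnj (y - Oc)) = r^2 * Re ((loc x - P) * cnj (loc y - P))"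
  proof -
    have "(x - Oc) * cnj (y - Oc) = complex_of_real (r^2) * (e * cnj e) * ((loc x - P) * cnj (loc y - P))"
      unfolding diff by (simp add: power2_eq_square algebra_simps)
    then show ?thesis using ee by simp
  qed
  have ang': "Re ((loc x - P) * cnj (loc y - P)) \<le> cmod (loc x - P) * cmod (loc y - P) * cos (2*pi/n)"
  proof -
    have "r^2 * Re ((loc x - P) * cnj (loc y - P)) \<le> r^2 * (cmod (loc x - P) * cmod (loc y - P) * cos (2*pi/n))"
      using ang unfolding red cmd by (simp add: power2_eq_square algebra_simps)
    then show ?thesis using r0 by simp
  qed
  have RP: "Re P \<le> h"
  proof -
    have "Re P = Re ((Oc - c) * cnj e) / r" unfolding P_def loc_def by (simp add: Re_divide_of_real)
    then show ?thesis using inner r0 unfolding h_def by (simp add: divide_le_eq mult.commute)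
  qed
  have IX: "\<bar>Im (loc x)\<bar> \<le> w" using t1 tf(2) unfolding t1(5)
    by (simp add: abs_mult abs_le_iff mult_le_cancel_right1)
  have IY: "\<bar>Im (loc y)\<bar> \<le> w" using t2 tf(2) unfolding t2(5)
    by (simp add: abs_mult abs_le_iff mult_le_cancel_right1)
  have XY: "loc x \<noteq> loc y" using xy locinj by blast
  have XP: "loc x \<noteq> P" using xO locinj unfolding P_def by blast
  have YP: "loc y \<noteq> P" using yO locinj unfolding P_def by blast
  note CL = core_local[OF tf(1,2,3) tf(4) tf(5) tf(6) t1(4) t2(4) IX IY XY XP YP RP ang']
  have A: "cmod P ^ 2 \<le> Re P / h" by (rule CL(1))
  have M: "cmod (Oc - c) = r * cmod P" using bk[of Oc] ne r0 unfolding P_def by (simp add: norm_mult)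
  have R: "Re ((Oc - c) * cnj e) = r * Re P"
  proof -
    have "(Oc - c) * cnj e = complex_of_real r * e * P * cnj e" unfolding P_def by (simp only: bk[of Oc, symmetric])
    also have "\<dots> = complex_of_real r * (e * cnj e) * P" by (simp add: algebra_simps)
    finally have "(Oc - c) * cnj e = complex_of_real r * (e * cnj e) * P" .
    then show ?thesis using ee by simp
  qed
  have "cmod (Oc - c)^2 = r^2 * cmod P ^ 2" unfolding M by (simp add: power_mult_distrib)
  also have "\<dots> \<le> r^2 * (Re P / h)" using A by (intro mult_left_mono) auto
  also have "\<dots> = (r / h) * (r * Re P)" by (simp add: power2_eq_square)
  finally show "cmod (Oc - c)^2 \<le> (r / cos (pi / n)) * Re ((Oc - c) * cnj e)" unfolding R h_def .
  assume "Oc = c"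
  then have "P = 0" unfolding P_def loc_def by simp
  then have "(Im (loc x) = -w \<and> Im (loc y) = w) \<or> (Im (loc x) = w \<and> Im (loc y) = -w)" by (rule CL(2))
  moreover have "t = 0" if "(2 * t - 1) * w = -w" for t using that tf(2) by (simp add: algebra_simps)
  moreover have "t = 1" if "(2 * t - 1) * w = w" for t using that tf(2) by (simp add: algebra_simps)
  ultimately have "(t1 = 0 \<and> t2 = 1) \<or> (t1 = 1 \<and> t2 = 0)" using t1(5) t2(5) by metis
  then show "(x = V k \<and> y = V (Suc k)) \<or> (x = V (Suc k) \<and> y = V k)" using t1(3) t2(3) by auto
qed

lemma cos_nonpos_range: "-(3*pi/2) \<le> x \<Longrightarrow> x \<le> -(pi/2) \<Longrightarrow> cos x \<le> 0"
proof -
  assume "-(3*pi/2) \<le> x" "x \<le> -(pi/2)"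
  then have "0 \<le> cos (x + pi)" by (intro cos_ge_zero) auto
  then show "cos x \<le> 0" by simp
qed

lemma edir_int:
  assumes "n > 0"
  shows "edir th n (nat (k mod int n)) = cis (th + 2 * pi * of_int k / real n + pi / real n)"
proof -
  have km: "k = k mod int n + int n * (k div int n)" by simp
  have nn: "real (nat (k mod int n)) = of_int (k mod int n)" using assms by simp
  have "th + 2 * pi * of_int k / real n + pi / real n =
      (th + 2 * pi * of_int (k mod int n) / real n + pi / real n) + 2 * pi * of_int (k div int n)"
  proof -
    have "real_of_int k = real_of_int (k mod int n) + real n * real_of_int (k div int n)"
      by (metis km of_int_add of_int_mult of_int_of_nat_eq)
    then show ?thesis using assms by (simp add: field_simps)
  qed
  then have "cis (th + 2 * pi * of_int k / real n + pi / real n) =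
      cis (th + 2 * pi * of_int (k mod int n) / real n + pi / real n) * cis (2 * pi * of_int (k div int n))"
    by (simp only: cis_mult)
  also have "cis (2 * pi * of_int (k div int n)) = 1" by (intro cis_multiple_2pi) simp
  finally show ?thesis unfolding edir_def nn by simp
qed

lemma re_cnj_cis: "Re (d * cnj (cis phi)) = cmod d * cos (Arg d - phi)"
proof -
  have "d = complex_of_real (cmod d) * cis (Arg d)" using rcis_cmod_Arg[of d] unfolding rcis_def by simp
  then have "d * cnj (cis phi) = complex_of_real (cmod d) * cis (Arg d - phi)"
    by (metis cis_cnj_mult mult.assoc)
  then show ?thesis by simp
qed

lemma center_eq:
  fixes d :: complex and th rho :: real and n :: nat and F :: "nat set"
  assumes n5: "n \<ge> 5" and rho: "rho > 0"
    and cov: "\<forall>k<n. k \<in> F \<or> Suc k mod n \<in> F"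
    and H: "\<forall>k\<in>F. cmod d ^ 2 \<le> rho * Re (d * cnj (edir th n k))"
  shows "d = 0"
proof (rule ccontr)
  assume d0: "d \<noteq> 0"
  have n0: "n > 0" using n5 by simp
  have rn: "real n \<ge> 5" using n5 by simp
  define al where "al = 2 * pi / n"
  have al0: "al > 0" unfolding al_def using n0 by simp
  have al2: "2 * al \<le> pi" unfolding al_def using rn by (simp add: field_simps)
  have pos: "Re (d * cnj (edir th n k)) > 0" if "k \<in> F" for k
  proof -
    have "cmod d ^ 2 > 0" using d0 by simp
    moreover have "cmod d ^ 2 \<le> rho * Re (d * cnj (edir th n k))" using H that by blast
    ultimately have "0 < rho * Re (d * cnj (edir th n k))" by linarith
    then show ?thesis using rho by (simp add: zero_less_mult_iff)
  qed
  define Y where "Y = Arg d - th - pi / n + pi / 2"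
  define m where "m = \<lceil>Y / al\<rceil>"
  have "Y / al \<le> of_int m" "of_int m - 1 < Y / al" using ceiling_correct[of "Y / al"] unfolding m_def by auto
  then have "Y \<le> of_int m * al" "(of_int m - 1) * al < Y" using al0 by (simp_all add: divide_le_eq less_divide_eq)
  then have m1: "Y \<le> of_int m * al" and m2: "of_int m * al < Y + al" by (simp_all add: algebra_simps)
  define x where "x j = Arg d - (th + 2 * pi * of_int j / real n + pi / real n)" for j :: int
  have xj: "x j = Y - pi/2 - of_int j * al" for j unfolding x_def Y_def al_def by (simp add: field_simps)
  have cneg: "cos (x j) \<le> 0" if "j = m \<or> j = m + 1" for j
  proof (rule cos_nonpos_range)
    have e: "of_int (m + 1) * al = of_int m * al + al" by (simp add: algebra_simps)
    have "- (3 * pi / 2) \<le> x m" using xj[of m] m2 al2 pi_gt_zero by linarith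
    moreover have "- (3 * pi / 2) \<le> x (m+1)" using xj[of "m+1"] e m2 al2 pi_gt_zero by linarith
    ultimately show "- (3 * pi / 2) \<le> x j" using that by auto
    have "x m \<le> - (pi / 2)" using xj[of m] m1 by linarith
    moreover have "x (m+1) \<le> - (pi / 2)" using xj[of "m+1"] e m1 al0 by linarith
    ultimately show "x j \<le> - (pi / 2)" using that by auto
  qed
  have re: "Re (d * cnj (edir th n (nat (j mod int n)))) = cmod d * cos (x j)" for j
    unfolding edir_int[OF n0] x_def by (rule re_cnj_cis)
  define k0 where "k0 = nat (m mod int n)"
  have k0n: "k0 < n" unfolding k0_def using n0 by (simp add: nat_less_iff)
  have k1: "Suc k0 mod n = nat ((m + 1) mod int n)"
  proof -
    have "int (Suc k0 mod n) = (int k0 + 1) mod int n" by (simp add: zmod_int add.commute)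
    also have "\<dots> = (m mod int n + 1) mod int n" unfolding k0_def using n0 by simp
    also have "\<dots> = (m + 1) mod int n" by (simp add: mod_add_left_eq)
    finally show ?thesis by (metis nat_int)
  qed
  have "Re (d * cnj (edir th n k0)) \<le> 0"
    using re[of m] cneg[of m] unfolding k0_def by (simp add: mult_nonneg_nonpos)
  moreover have "Re (d * cnj (edir th n (Suc k0 mod n))) \<le> 0"
    using re[of "m+1"] cneg[of "m+1"] unfolding k1 by (simp add: mult_nonneg_nonpos)
  ultimately show False using cov k0n pos by (meson not_less)
qed



lemma cos_le_range:
  assumes "0 < al" "al \<le> pi" "al \<le> x" "x \<le> 2*pi - al"
  shows "cos x \<le> cos al"
proof (cases "x \<le> pi")
  case True
  then show ?thesis using assms by (intro cos_monotone_0_pi_le) auto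
next
  case False
  have "cos x = cos (2*pi - x)" by simp
  also have "\<dots> \<le> cos al" using assms False by (intro cos_monotone_0_pi_le) auto
  finally show ?thesis .
qed

lemma gap_ge:
  assumes "0 < g" "g < 2*pi" "cos g = cos al" "0 < al" "al \<le> pi"
  shows "al \<le> g"
proof (rule ccontr)
  assume "\<not> al \<le> g"
  then have "cos al < cos g" using assms by (intro cos_monotone_0_pi) auto
  then show False using assms by simp
qed

lemma equi_pair:
  fixes S :: "complex set" and c0 :: complex
  assumes eq: "Equiangular S c0" and fin: "finite S" and n5: "card S \<ge> 5" and c0S: "c0 \<notin> S"
  shows "\<forall>p\<in>S. \<forall>q\<in>S. p \<noteq> q \<longrightarrow> Re ((p - c0) * cnj (q - c0)) \<le> cmod (p - c0) * cmod (q - c0) * cos (2*pi / card S)"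
proof -
  define n where "n = card S"
  define al where "al = 2 * pi / n"
  have rn: "real n \<ge> 5" using n5 unfolding n_def by simp
  have al0: "0 < al" and alpi: "al \<le> pi" unfolding al_def using rn by (auto simp: field_simps)
  obtain p :: "nat \<Rightarrow> complex" and a :: "nat \<Rightarrow> real" where
    bij: "bij_betw p {..<n} S" and rep: "\<forall>i<n. p i = c0 + complex_of_real (cmod (p i - c0)) * cis (a i)"
    and mono: "\<forall>i j. i < j \<and> j < n \<longrightarrow> a i < a j" and wrap: "\<forall>i<n. a i < a 0 + 2 * pi"
    and ang: "\<forall>i<n. angle_at c0 (p i) (p ((i + 1) mod n)) = 2 * pi / real n"
    using eq unfolding Equiangular_def n_def Let_def by blast
  have pS: "i < n \<Longrightarrow> p i \<in> S" for i using bij by (auto simp: bij_betw_def)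
  define rh where "rh i = cmod (p i - c0)" for i
  have rh0: "i < n \<Longrightarrow> rh i > 0" for i using pS c0S unfolding rh_def by fastforce
  have pr: "p i - c0 = complex_of_real (rh i) * cis (a i)" if "i < n" for i
  proof -
    have "p i = c0 + complex_of_real (cmod (p i - c0)) * cis (a i)" using rep that by blast
    then have "p i - c0 = complex_of_real (cmod (p i - c0)) * cis (a i)" by (metis add_diff_cancel_left')
    then show ?thesis unfolding rh_def .
  qed
  have reij: "Re ((p i - c0) * cnj (p j - c0)) = rh i * rh j * cos (a i - a j)" if "i < n" "j < n" for i j
  proof -
    have "(p i - c0) * cnj (p j - c0) = complex_of_real (rh i) * cis (a i) * cnj (complex_of_real (rh j) * cis (a j))"
      by (simp only: pr[OF that(1)] pr[OF that(2)])
    also have "\<dots> = complex_of_real (rh i * rh j) * (cis (a i) * cnj (cis (a j)))" by (simp add: algebra_simps)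
    finally show ?thesis by (simp add: cis_cnj_mult)
  qed
  have cosang: "cos (a i - a ((i + 1) mod n)) = cos al" if "i < n" for i
  proof -
    define j where "j = (i + 1) mod n"
    have jn: "j < n" unfolding j_def using that by simp
    have inn: "(p i - c0) \<bullet> (p j - c0) = Re ((p i - c0) * cnj (p j - c0))" by (simp add: inner_complex_def algebra_simps)
    have "angle_at c0 (p i) (p j) = arccos (cos (a i - a j))"
      unfolding angle_at_def inn reij[OF that jn] using rh0[OF that] rh0[OF jn] unfolding rh_def by simp
    then have "arccos (cos (a i - a j)) = al" using ang that unfolding j_def al_def by simp
    then have "cos (arccos (cos (a i - a j))) = cos al" by simp
    then show ?thesis unfolding j_def[symmetric] by simp
  qed
  have n1: "n \<ge> 2" using rn by simp
  have amono: "a i \<le> a j" if "i \<le> j" "j < n" for i j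
  proof (cases "i = j")
    case False
    then have "a i < a j" using mono that by simp
    then show ?thesis by simp
  qed simp
  have gaps: "a (Suc i) - a i \<ge> al" if "Suc i < n" for i
  proof (rule gap_ge[OF _ _ _ al0 alpi])
    show "0 < a (Suc i) - a i" using mono that by auto
    have "a (Suc i) < a 0 + 2*pi" using wrap that by auto
    moreover have "a 0 \<le> a i" using amono[of 0 i] that by simp
    ultimately show "a (Suc i) - a i < 2 * pi" by simp
    have "cos (a i - a (Suc i)) = cos al" using cosang[of i] that by simp
    then show "cos (a (Suc i) - a i) = cos al" by (metis cos_minus minus_diff_eq)
  qed
  define D where "D = a 0 + 2*pi - a (n - 1)"
  have Dal: "al \<le> D"
  proof (rule gap_ge[OF _ _ _ al0 alpi])
    show "0 < D" unfolding D_def using wrap n1 by simp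
    have "a 0 < a (n - 1)" using mono n1 by simp
    then show "D < 2 * pi" unfolding D_def by simp
    have "(n - 1 + 1) mod n = 0" using n1 by simp
    then have "cos (a (n - 1) - a 0) = cos al" using cosang[of "n - 1"] n1 by simp
    moreover have "a (n - 1) - a 0 = 2*pi - D" unfolding D_def by simp
    ultimately show "cos D = cos al" by simp
  qed
  have rng: "al \<le> a j - a i \<and> a j - a i \<le> 2*pi - al" if "i < j" "j < n" for i j
  proof
    have "j > 0" using that(1) by simp
    then obtain j' where j': "j = Suc j'" using gr0_implies_Suc by blast
    have "a (Suc j') - a j' \<ge> al" using gaps[of j'] j' that by simp
    moreover have "a i \<le> a j'" using amono[of i j'] j' that by simp
    ultimately show "al \<le> a j - a i" using j' by simp
    have "a j \<le> a (n - 1)" using amono that by simp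
    moreover have "a 0 \<le> a i" using amono that by simp
    ultimately show "a j - a i \<le> 2*pi - al" using Dal unfolding D_def by simp
  qed
  show ?thesis
  proof (intro ballI impI)
    fix x y assume xS: "x \<in> S" and yS: "y \<in> S" and xy: "x \<noteq> y"
    obtain i where i: "i < n" "x = p i" using xS bij by (auto simp: bij_betw_def)
    obtain j where j: "j < n" "y = p j" using yS bij by (auto simp: bij_betw_def)
    have ij: "i \<noteq> j" using i j xy by auto
    have "cos (a i - a j) \<le> cos al"
    proof (cases "i < j")
      case True
      have "cos (a j - a i) \<le> cos al" using rng[OF True j(1)] al0 alpi by (intro cos_le_range) auto
      then show ?thesis by (metis cos_minus minus_diff_eq)
    next
      case False
      then have "j < i" using ij by simp
      then show ?thesis using rng[OF _ i(1)] al0 alpi by (intro cos_le_range) auto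
    qed
    then have "rh i * rh j * cos (a i - a j) \<le> rh i * rh j * cos al"
      using rh0 i j by (intro mult_left_mono) (auto intro: less_imp_le)
    then show "Re ((x - c0) * cnj (y - c0)) \<le> cmod (x - c0) * cmod (y - c0) * cos (2*pi / card S)"
      using reij[OF i(1) j(1)] i j unfolding rh_def al_def n_def by simp
  qed
qed



lemma cmod_shift_sq:
  "cmod (z - complex_of_real e * u)^2 = cmod z^2 - 2*e*Re(z * cnj u) + e^2 * cmod u^2"
  by (simp only: cmod_power2) (simp add: power2_eq_square algebra_simps)

lemma sed_halfplane:
  fixes S :: "complex set" and c0 u :: complex
  assumes sed: "sed_center S c0" and fin: "finite S" and ne: "S \<noteq> {}"
  shows "\<exists>s\<in>S. Re ((s - c0) * cnj u) \<ge> 0"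
proof (rule ccontr)
  assume "\<not> ?thesis"
  then have neg: "\<forall>s\<in>S. Re ((s - c0) * cnj u) < 0" by auto
  obtain r where r: "S \<subseteq> cball c0 r" and rmin: "\<forall>c' r'. S \<subseteq> cball c' r' \<longrightarrow> r \<le> r'"
    using sed unfolding sed_center_def by blast
  obtain s0 where s0: "s0 \<in> S" using ne by blast
  have u0: "u \<noteq> 0" using neg s0 by fastforce
  define dl where "dl = Min ((\<lambda>s. - Re ((s - c0) * cnj u)) ` S)"
  have dl0: "dl > 0" unfolding dl_def
  proof (subst Min_gr_iff)
    show "finite ((\<lambda>s. - Re ((s - c0) * cnj u)) ` S)" using fin by simp
    show "(\<lambda>s. - Re ((s - c0) * cnj u)) ` S \<noteq> {}" using ne by simp
    show "\<forall>a\<in>(\<lambda>s. - Re ((s - c0) * cnj u)) ` S. 0 < a"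
    proof
      fix a assume "a \<in> (\<lambda>s. - Re ((s - c0) * cnj u)) ` S"
      then obtain s where s: "s \<in> S" "a = - Re ((s - c0) * cnj u)" by blast
      have "Re ((s - c0) * cnj u) < 0" using neg s(1) by blast
      then show "0 < a" using s(2) by linarith
    qed
  qed
  have dlle: "dl \<le> - Re ((s - c0) * cnj u)" if "s \<in> S" for s unfolding dl_def using fin that by simp
  define e where "e = dl / cmod u ^ 2"
  have cu: "cmod u ^ 2 > 0" using u0 by simp
  have e0: "e > 0" unfolding e_def using dl0 cu by simp
  have eu: "e * cmod u ^ 2 = dl" unfolding e_def using cu by simp
  define c' where "c' = c0 - complex_of_real e * u"
  have "dist c0 s0 \<le> r" using r s0 by auto
  then have rr: "r \<ge> 0" using zero_le_dist[of c0 s0] by linarith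
  have bnd: "cmod (s - c')^2 \<le> r^2 - e * dl" if "s \<in> S" for s
  proof -
    have "s - c' = (s - c0) - complex_of_real (- e) * u" unfolding c'_def by simp
    then have "cmod (s - c')^2 = cmod (s - c0)^2 - 2*(-e)*Re((s - c0) * cnj u) + (-e)^2 * cmod u^2"
      using cmod_shift_sq[of "s - c0" "-e" u] by (simp only:)
    then have "cmod (s - c')^2 = cmod (s - c0)^2 + 2*e*Re((s - c0) * cnj u) + e^2 * cmod u^2"
      by (simp only: power2_minus mult_minus_left mult_minus_right diff_minus_eq_add)
    also have "e^2 * cmod u^2 = e * dl" using eu by (simp add: power2_eq_square)
    also have "Re((s - c0) * cnj u) \<le> - dl" using dlle[OF that] by linarith
    then have "2*e*Re((s - c0) * cnj u) \<le> 2*e*(- dl)" by (rule mult_left_mono) (use e0 in auto)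
    then have "cmod (s - c0)^2 + 2*e*Re((s - c0) * cnj u) + e * dl \<le> cmod (s - c0)^2 - e * dl" by simp
    also have "cmod (s - c0) \<le> r" using r that by (auto simp: dist_norm norm_minus_commute)
    then have "cmod (s - c0)^2 \<le> r^2" using rr by (simp add: power_mono)
    then have "cmod (s - c0)^2 - e * dl \<le> r^2 - e * dl" by simp
    finally show ?thesis .
  qed
  have nn: "r^2 - e * dl \<ge> 0" using bnd[OF s0] by (smt (verit) zero_le_power2)
  define r' where "r' = sqrt (r^2 - e * dl)"
  have "S \<subseteq> cball c' r'"
  proof
    fix s assume "s \<in> S"
    then have "cmod (s - c')^2 \<le> r^2 - e * dl" by (rule bnd)
    then have "cmod (s - c') \<le> r'" unfolding r'_def by (simp add: real_le_rsqrt)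
    then show "s \<in> cball c' r'" by (simp add: dist_norm norm_minus_commute)
  qed
  then have "r \<le> r'" using rmin by blast
  moreover have "r' < r"
  proof -
    have "r^2 - e * dl < r^2" using e0 dl0 by simp
    then have "r' < sqrt (r^2)" unfolding r'_def by (rule real_sqrt_less_mono)
    then show ?thesis using rr by simp
  qed
  ultimately show False by simp
qed



theorem lemma5p12:
  fixes S :: "complex set" and c0 :: complex
  assumes "finite S"
    and "card S > 4"
    and "sed_center S c0"
    and "c0 \<notin> S"
    and "\<forall>p\<in>S. \<forall>q\<in>S. p \<noteq> q \<longrightarrow> \<not> (\<exists>t>0. p - c0 = complex_of_real t * (q - c0))"
    and "Pre_regular S"
    and "Equiangular S c0"
  shows "Regular S"
proof -
  define n where "n = card S"
  have n5: "n \<ge> 5" using assms(2) unfolding n_def by simp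
  have n3: "n \<ge> 3" using n5 by simp
  have n0: "n > 0" using n5 by simp
  have Sne: "S \<noteq> {}" using n5 unfolding n_def by auto
  obtain c r th where r0: "r > 0" and pre: "\<forall>k<n.
      (card (S \<inter> closed_segment (rpoly_vertex c r th n k) (rpoly_vertex c r th n (k + 1))) = 2 \<and>
         S \<inter> open_segment (rpoly_vertex c r th n (k + 1)) (rpoly_vertex c r th n (k + 2)) = {}) \<or>
      (card (S \<inter> closed_segment (rpoly_vertex c r th n (k + 1)) (rpoly_vertex c r th n (k + 2))) = 2 \<and>
         S \<inter> open_segment (rpoly_vertex c r th n k) (rpoly_vertex c r th n (k + 1)) = {})"
    using assms(6) unfolding Pre_regular_def n_def Let_def by blast
  define V where "V = rpoly_vertex c r th n"
  have Vmod: "V (m mod n) = V m" for m unfolding V_def by (rule rpoly_vertex_mod[OF n0])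
  define F where "F = {k. k < n \<and> card (S \<inter> closed_segment (V k) (V (Suc k))) = 2}"
  have cov: "\<forall>k<n. k \<in> F \<or> Suc k mod n \<in> F"
  proof (intro allI impI)
    fix k assume kn: "k < n"
    from pre kn have "card (S \<inter> closed_segment (V k) (V (Suc k))) = 2 \<or>
        card (S \<inter> closed_segment (V (Suc k)) (V (Suc (Suc k)))) = 2"
      unfolding V_def by auto
    then show "k \<in> F \<or> Suc k mod n \<in> F"
    proof
      assume "card (S \<inter> closed_segment (V k) (V (Suc k))) = 2"
      then show ?thesis unfolding F_def using kn by simp
    next
      assume h: "card (S \<inter> closed_segment (V (Suc k)) (V (Suc (Suc k)))) = 2"
      have "V (Suc k mod n) = V (Suc k)" by (rule Vmod)
      moreover have "V (Suc (Suc k mod n)) = V (Suc (Suc k))"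
        by (metis Vmod mod_Suc_eq)
      ultimately have "card (S \<inter> closed_segment (V (Suc k mod n)) (V (Suc (Suc k mod n)))) = 2" using h by simp
      then show ?thesis unfolding F_def using n0 by simp
    qed
  qed
  have Fn: "k \<in> F \<Longrightarrow> k < n" for k unfolding F_def by simp
  have cover: "S \<subseteq> (\<Union>k\<in>F. closed_segment (V k) (V (Suc k)))"
    using cover_S[OF assms(1) n_def[symmetric] n3 r0 _ cov, of c th] unfolding V_def F_def by simp
  define h where "h = cos (pi / n)"
  have h0: "h > 0" unfolding h_def using trig_facts[OF n5] by simp
  have supS: "Re ((s - c) * cnj (edir th n k)) \<le> r * h" if sS: "s \<in> S" for s k
  proof -
    obtain j where j: "j \<in> F" "s \<in> closed_segment (V j) (V (Suc j))" using cover sS by blast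
    obtain t where t: "0 \<le> t" "t \<le> 1"
      "\<forall>E c. Re ((s - c) * cnj E) = (1 - t) * Re ((V j - c) * cnj E) + t * Re ((V (Suc j) - c) * cnj E)"
      using seg_param[OF j(2)] by blast
    have a: "Re ((V j - c) * cnj (edir th n k)) \<le> r * h"
      using supp_le(1)[OF n3 r0, of c th j k] unfolding V_def h_def edir_def .
    have b: "Re ((V (Suc j) - c) * cnj (edir th n k)) \<le> r * h"
      using supp_le(1)[OF n3 r0, of c th "Suc j" k] unfolding V_def h_def edir_def .
    have "(1 - t) * Re ((V j - c) * cnj (edir th n k)) + t * Re ((V (Suc j) - c) * cnj (edir th n k))
        \<le> (1 - t) * (r * h) + t * (r * h)"
      using a b t(1,2) by (intro add_mono mult_left_mono) auto
    moreover have "(1 - t) * (r * h) + t * (r * h) = r * h" by (simp add: algebra_simps)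
    moreover have "Re ((s - c) * cnj (edir th n k)) = (1 - t) * Re ((V j - c) * cnj (edir th n k)) + t * Re ((V (Suc j) - c) * cnj (edir th n k))"
      using t(3) by blast
    ultimately show ?thesis by linarith
  qed
  have inner: "Re ((c0 - c) * cnj (edir th n k)) \<le> r * h" for k
  proof -
    obtain s where s: "s \<in> S" "Re ((s - c0) * cnj (edir th n k)) \<ge> 0"
      using sed_halfplane[OF assms(3) assms(1) Sne] by blast
    have "Re ((c0 - c) * cnj (edir th n k)) = Re ((s - c) * cnj (edir th n k)) - Re ((s - c0) * cnj (edir th n k))"
      by (simp add: algebra_simps)
    then show ?thesis using supS[OF s(1), of k] s(2) by linarith
  qed
  have EP: "\<forall>p\<in>S. \<forall>q\<in>S. p \<noteq> q \<longrightarrow> Re ((p - c0) * cnj (q - c0)) \<le> cmod (p - c0) * cmod (q - c0) * cos (2*pi / n)"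
    using equi_pair[OF assms(7) assms(1) _ assms(4)] n5 unfolding n_def by simp
  have two: "\<exists>x y. x \<in> S \<and> y \<in> S \<and> x \<noteq> y \<and> x \<in> closed_segment (V k) (V (Suc k)) \<and> y \<in> closed_segment (V k) (V (Suc k))"
    if kF: "k \<in> F" for k
  proof -
    have "card (S \<inter> closed_segment (V k) (V (Suc k))) = 2" using kF unfolding F_def by simp
    then obtain x y where "x \<noteq> y" "S \<inter> closed_segment (V k) (V (Suc k)) = {x, y}" by (auto simp: card_2_iff)
    then show ?thesis by blast
  qed
  have ineq: "cmod (c0 - c)^2 \<le> (r / h) * Re ((c0 - c) * cnj (edir th n k))" if kF: "k \<in> F" for k
  proof -
    obtain x y where xy: "x \<in> S" "y \<in> S" "x \<noteq> y" "x \<in> closed_segment (V k) (V (Suc k))" "y \<in> closed_segment (V k) (V (Suc k))"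
      using two[OF kF] by blast
    have "x \<noteq> c0" "y \<noteq> c0" using xy assms(4) by auto
    moreover have "Re ((x - c0) * cnj (y - c0)) \<le> cmod (x - c0) * cmod (y - c0) * cos (2*pi / n)"
      using EP xy by blast
    ultimately show ?thesis
      using core_complex(1)[OF n5 r0 xy(4,5)[unfolded V_def] xy(3), of c0] inner[of k]
      unfolding h_def by auto
  qed
  have rho: "r / h > 0" using r0 h0 by simp
  have "c0 - c = 0"
    by (rule center_eq[OF n5 rho cov]) (use ineq in blast)
  then have cc: "c0 = c" by simp
  have vin: "V k \<in> S \<and> V (Suc k) \<in> S" if kF: "k \<in> F" for k
  proof -
    obtain x y where xy: "x \<in> S" "y \<in> S" "x \<noteq> y" "x \<in> closed_segment (V k) (V (Suc k))" "y \<in> closed_segment (V k) (V (Suc k))"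
      using two[OF kF] by blast
    have ne: "x \<noteq> c0" "y \<noteq> c0" using xy assms(4) by auto
    have an: "Re ((x - c0) * cnj (y - c0)) \<le> cmod (x - c0) * cmod (y - c0) * cos (2*pi / n)"
      using EP xy by blast
    have "(x = V k \<and> y = V (Suc k)) \<or> (x = V (Suc k) \<and> y = V k)"
      using core_complex(2)[OF n5 r0 xy(4,5)[unfolded V_def] xy(3) ne inner[of k, unfolded h_def] an cc]
      unfolding V_def by simp
    then show ?thesis using xy by auto
  qed
  have allv: "V j \<in> S" if "j < n" for j
  proof (cases "j \<in> F")
    case True then show ?thesis using vin by blast
  next
    case False
    define p where "p = (j + n - 1) mod n"
    have p: "p < n" "Suc p mod n = j" using pred_mod[OF that] unfolding p_def by auto
    then have "p \<in> F" using cov False by metis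
    then have "V (Suc p) \<in> S" using vin by blast
    moreover have "V (Suc p) = V j" using Vmod[of "Suc p"] p(2) by simp
    ultimately show ?thesis by simp
  qed
  have sub: "V ` {..<n} \<subseteq> S" using allv by auto
  have injV: "inj_on V {..<n}" unfolding V_def by (rule inj_onI) (use vertex_inj[OF n3 r0] in auto)
  have "card (V ` {..<n}) = n" using injV by (simp add: card_image)
  then have SV: "S = V ` {..<n}" using card_subset_eq[OF assms(1) sub] n_def by simp
  show ?thesis unfolding Regular_def regular_ngon_def n_def[symmetric]
    using n3 r0 SV unfolding V_def by blast
qed


end
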